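(* Let $\varepsilon>0$ and $R,R'>\varepsilon$. Let $(E,d)$ be a metric space whose Borel $\sigma$-algebra makes it a standard Borel space, let $\nu$ be a Radon (probability) measure on it, and let $A\subset\mathrm{Supp}(\nu)$ be closed. If the MaxEnt posterior of $(\nu,A)$ with truncation parameter $R$ exists and equals $\mu^\star$, then the MaxEnt posterior of $(\nu,A)$ with truncation parameter $R'$ also exists and equals $\mu^\star$.
   Context: For a truncation parameter $r>0$: for each $\sigma>0$ consider the problem $\inf_\mu\{\mathrm{Ent}_\nu(\mu):\mu(E)=1,\ \int_E d_r(x,A)^2\,d\mu(x)\le\sigma^2\}$, where $d(x,A)=\inf_{y\in A}d(x,y)$, $d_r=\min(d,r)$, and $\mathrm{Ent}_\nu(\mu)=\int\frac{d\mu}{d\nu}\ln\frac{d\mu}{d\nu}\,d\nu$ if $\mu\ll\nu$, $+\infty$ otherwise. If for every $\sigma>0$ the infimum is attained by a unique measure $\mu_\sigma$ and $\mu_\sigma$ converges weakly as $\sigma\to0$, its limit is the MaxEnt posterior of $(\nu,A)$ with truncation parameter $r$. $\mathrm{Supp}(\nu)$ is the complement of the union of all $\nu$-null open sets. *)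

theory Defs
  imports "HOL-Probability.Probability"
begin

definition standard_borel_space :: "'a::metric_space itself \<Rightarrow> bool" where
  "standard_borel_space _ \<longleftrightarrow>
     (\<exists>T :: 'a topology. topspace T = UNIV \<and> completely_metrizable_space T \<and>
        separable_space T \<and> sigma_sets UNIV {S. openin T S} = sets (borel :: 'a measure))"

definition borel_prob :: "'a::metric_space measure \<Rightarrow> bool" where
  "borel_prob \<mu> \<longleftrightarrow> sets \<mu> = sets (borel :: 'a measure) \<and> prob_space \<mu>"

definition radon_prob :: "'a::metric_space measure \<Rightarrow> bool" where
  "radon_prob \<nu> \<longleftrightarrow> borel_prob \<nu> \<and>
     (\<forall>B \<in> sets (borel :: 'a measure).
        emeasure \<nu> B = (SUP K \<in> {K. compact K \<and> K \<subseteq> B}. emeasure \<nu> K))"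

definition Supp :: "'a::metric_space measure \<Rightarrow> 'a set" where
  "Supp \<nu> = - \<Union>{U. open U \<and> emeasure \<nu> U = 0}"

text \<open>Truncated distance d_r(x,A) = min(d(x,A), r), with d(x,{}) = +infinity.\<close>
definition trunc_dist :: "real \<Rightarrow> 'a::metric_space set \<Rightarrow> 'a \<Rightarrow> real" where
  "trunc_dist r A x = (if A = {} then r else min (infdist x A) r)"

text \<open>Relative entropy Ent_nu(mu) = integral of f ln f d nu, f = d mu / d nu,
  if mu << nu, and +infinity otherwise (the negative part is bounded by 1/e).\<close>
definition rel_entropy :: "'a measure \<Rightarrow> 'a measure \<Rightarrow> ereal" where
  "rel_entropy \<nu> \<mu> =
     (if absolutely_continuous \<nu> \<mu> then
        (let g = (\<lambda>x. let f = enn2real (RN_deriv \<nu> \<mu> x) in f * ln f) in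
          enn2ereal (\<integral>\<^sup>+ x. ennreal (max 0 (g x)) \<partial>\<nu>)
          - enn2ereal (\<integral>\<^sup>+ x. ennreal (max 0 (- g x)) \<partial>\<nu>))
      else \<infinity>)"

definition maxent_feasible :: "real \<Rightarrow> 'a::metric_space set \<Rightarrow> real \<Rightarrow> 'a measure \<Rightarrow> bool" where
  "maxent_feasible r A \<sigma> \<mu> \<longleftrightarrow> borel_prob \<mu> \<and>
     (\<integral> x. (trunc_dist r A x)\<^sup>2 \<partial>\<mu>) \<le> \<sigma>\<^sup>2"

definition maxent_minimizer ::
  "'a::metric_space measure \<Rightarrow> 'a set \<Rightarrow> real \<Rightarrow> real \<Rightarrow> 'a measure \<Rightarrow> bool" where
  "maxent_minimizer \<nu> A r \<sigma> \<mu> \<longleftrightarrow> maxent_feasible r A \<sigma> \<mu> \<and>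
     (\<forall>\<mu>'. maxent_feasible r A \<sigma> \<mu>' \<longrightarrow> rel_entropy \<nu> \<mu> \<le> rel_entropy \<nu> \<mu>')"

definition weak_conv_filter ::
  "('i \<Rightarrow> 'a::metric_space measure) \<Rightarrow> 'a measure \<Rightarrow> 'i filter \<Rightarrow> bool" where
  "weak_conv_filter M \<mu> F \<longleftrightarrow>
     (\<forall>f :: 'a \<Rightarrow> real. continuous_on UNIV f \<and> bounded (range f) \<longrightarrow>
        ((\<lambda>i. \<integral> x. f x \<partial>(M i)) \<longlongrightarrow> (\<integral> x. f x \<partial>\<mu>)) F)"

definition maxent_posterior ::
  "'a::metric_space measure \<Rightarrow> 'a set \<Rightarrow> real \<Rightarrow> 'a measure \<Rightarrow> bool" where
  "maxent_posterior \<nu> A r \<mu> \<longleftrightarrow>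
     (\<forall>\<sigma>>0. \<exists>!m. maxent_minimizer \<nu> A r \<sigma> m) \<and> borel_prob \<mu> \<and>
     weak_conv_filter (\<lambda>\<sigma>. THE m. maxent_minimizer \<nu> A r \<sigma> m) \<mu> (at_right 0)"

end

theory Submission
  imports Defs
begin
lemma tangent_ineq:
  fixes t a :: real assumes "0 \<le> t" "0 < a"
  shows "a * ln a + (1 + ln a) * (t - a) \<le> t * ln t"
proof (cases "t = 0")
  case True thus ?thesis using assms by simp
next
  case False
  hence tp: "t > 0" using assms by simp
  have "ln (a/t) \<le> a/t - 1" using ln_le_minus_one tp assms by simp
  hence "t * ln (a/t) \<le> t * (a/t - 1)" using tp by (intro mult_left_mono) auto
  moreover have "t * (a/t - 1) = a - t" using tp by (simp add: field_simps)
  moreover have "ln (a/t) = ln a - ln t" using tp assms by (simp add: ln_div)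
  ultimately have "t * (ln a - ln t) \<le> a - t" by simp
  thus ?thesis by (simp add: algebra_simps)
qed

lemma tangent_eq:
  fixes t a :: real assumes "0 \<le> t" "0 < a"
    and "t * ln t = a * ln a + (1 + ln a) * (t - a)"
  shows "t = a"
proof (cases "t = 0")
  case True thus ?thesis using assms by simp
next
  case False
  hence tp: "t > 0" using assms by simp
  have "t * (ln a - ln t) = a - t" using assms(3) by (simp add: algebra_simps)
  moreover have "t * (a/t - 1) = a - t" using tp by (simp add: field_simps)
  moreover have "ln (a/t) = ln a - ln t" using tp assms by (simp add: ln_div)
  ultimately have "t * ln (a/t) = t * (a/t - 1)" by simp
  hence "ln (a/t) = a/t - 1" using tp by simp
  hence "a/t = 1" using ln_eq_minus_one[of "a/t"] tp assms by simp
  thus ?thesis using tp by simp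
qed

lemma ereal_split_lemma:
  fixes P Q H Tp Tm :: ennreal
  assumes "P + Tm = H + Tp + Q" "Q < \<infinity>" "Tp < \<infinity>" "Tm < \<infinity>"
  shows "enn2ereal P - enn2ereal Q = enn2ereal H + (ereal (enn2real Tp) - ereal (enn2real Tm))"
proof -
  have e: "enn2ereal P + enn2ereal Tm = enn2ereal H + enn2ereal Tp + enn2ereal Q"
    using assms(1) by (simp add: plus_ennreal.rep_eq[symmetric])
  have fin: "enn2ereal X = ereal (enn2real X)" if "X < \<infinity>" for X
    using that by (cases X rule: ennreal_cases) auto
  obtain q tp tm where q: "enn2ereal Q = ereal q" and tp: "enn2ereal Tp = ereal tp" and tm: "enn2ereal Tm = ereal tm"
    and tpe: "enn2real Tp = tp" and tme: "enn2real Tm = tm"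
    using fin assms(2-4) by (metis ereal.inject)
  show ?thesis
  proof (cases "P = \<infinity>")
    case True
    hence "H + Tp + Q = \<infinity>" using assms(1) by simp
    hence "H = \<infinity>" using assms(2,3) by (auto simp: ennreal_add_eq_top)
    thus ?thesis using True q tp tm tpe tme by simp
  next
    case False
    have "P + Tm \<noteq> \<infinity>" using False assms(4) by (auto simp: ennreal_add_eq_top)
    hence "H \<noteq> \<infinity>" using assms(1) by (auto simp: ennreal_add_eq_top)
    then obtain p h where p: "enn2ereal P = ereal p" and h: "enn2ereal H = ereal h"
      using fin False by (metis less_top infinity_ennreal_def)
    have "p + tm = h + tp + q" using e p h q tp tm by simp
    thus ?thesis using p h q tpe tme by simp
  qed
qed

locale gibbs = prob_space M for M :: "'a::metric_space measure" +
  fixes r :: real and A :: "'a set"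
  assumes sets_M: "sets M = sets (borel :: 'a measure)"
    and r_pos: "r > 0" and A_ne: "A \<noteq> {}" and A_closed: "closed A"
    and A_supp: "A \<subseteq> Supp M"
begin

definition V :: "'a \<Rightarrow> real" where "V x = (trunc_dist r A x)\<^sup>2"
definition Z :: "real \<Rightarrow> real" where "Z l = (\<integral>x. exp (- l * V x) \<partial>M)"
definition N :: "real \<Rightarrow> real" where "N l = (\<integral>x. V x * exp (- l * V x) \<partial>M)"
definition g :: "real \<Rightarrow> 'a \<Rightarrow> real" where "g l x = exp (- l * V x) / Z l"
definition G :: "real \<Rightarrow> 'a measure" where "G l = density M (\<lambda>x. ennreal (g l x))"
definition mm :: "real \<Rightarrow> real" where "mm l = N l / Z l"

lemma meas: "f \<in> borel_measurable borel \<Longrightarrow> f \<in> borel_measurable M"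
  by (subst measurable_cong_sets[OF sets_M refl])

lemma space_M: "space M = UNIV"
  using sets_eq_imp_space_eq[OF sets_M] by simp

lemma td_eq: "trunc_dist r A x = min (infdist x A) r"
  using A_ne by (simp add: trunc_dist_def)

lemma td_cont: "continuous_on UNIV (trunc_dist r A)"
  unfolding td_eq[abs_def] by (intro continuous_intros)

lemma V_cont: "continuous_on UNIV V"
  unfolding V_def[abs_def] using td_cont by (intro continuous_intros)

lemma V_borel: "V \<in> borel_measurable borel"
  using V_cont by (rule borel_measurable_continuous_onI) 

lemma V_meas[measurable]: "V \<in> borel_measurable M"
  using V_borel meas by blast

lemma V_nonneg: "0 \<le> V x" by (simp add: V_def)

lemma V_le: "V x \<le> r\<^sup>2"
proof -
  have "0 \<le> trunc_dist r A x" "trunc_dist r A x \<le> r"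
    using td_eq infdist_nonneg r_pos by auto
  thus ?thesis unfolding V_def by (simp add: power_mono)
qed

lemma V_zero_iff: "V x = 0 \<longleftrightarrow> x \<in> A"
  unfolding V_def td_eq using r_pos in_closed_iff_infdist_zero[OF A_closed A_ne, of x]
  by (auto simp: min_def)

lemma bounded_integrable:
  fixes B :: real
  assumes "f \<in> borel_measurable M" "\<And>x. \<bar>f x\<bar> \<le> B"
  shows "integrable M f"
  using assms by (intro integrable_const_bound[where B=B]) auto

lemma exp_meas[measurable]: "(\<lambda>x. exp (- l * V x)) \<in> borel_measurable M"
  by measurable

lemma exp_bounds: "0 \<le> l \<Longrightarrow> exp (- l * r\<^sup>2) \<le> exp (- l * V x) \<and> exp (- l * V x) \<le> 1"
  using V_le[of x] V_nonneg[of x] by (auto intro: mult_left_mono mult_nonneg_nonneg)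

lemma int_exp: "0 \<le> l \<Longrightarrow> integrable M (\<lambda>x. exp (- l * V x))"
  by (rule bounded_integrable[where B=1]) (use exp_bounds in auto)

lemma int_Vexp: "0 \<le> l \<Longrightarrow> integrable M (\<lambda>x. V x * exp (- l * V x))"
proof (rule bounded_integrable[where B="r\<^sup>2"])
  fix x assume "0 \<le> l"
  have "V x * exp (- l * V x) \<le> r\<^sup>2 * 1"
    using exp_bounds[OF \<open>0 \<le> l\<close>, of x] V_le[of x] V_nonneg[of x] by (intro mult_mono) auto
  thus "\<bar>V x * exp (- l * V x)\<bar> \<le> r\<^sup>2" using V_nonneg[of x] by simp
qed measurable

lemma Z_lower: "0 \<le> l \<Longrightarrow> exp (- l * r\<^sup>2) \<le> Z l"
proof -
  assume l: "0 \<le> l"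
  have "(\<integral>x. exp (- l * r\<^sup>2) \<partial>M) \<le> Z l"
    unfolding Z_def using exp_bounds[OF l] int_exp[OF l] by (intro integral_mono) auto
  thus ?thesis by (simp add: prob_space)
qed

lemma Z_pos: "0 \<le> l \<Longrightarrow> 0 < Z l"
  using Z_lower by (meson exp_gt_zero less_le_trans)

lemma g_pos: "0 \<le> l \<Longrightarrow> 0 < g l x"
  using Z_pos by (simp add: g_def)

lemma g_meas[measurable]: "g l \<in> borel_measurable M"
  unfolding g_def[abs_def] by measurable

lemma int_g: "0 \<le> l \<Longrightarrow> (\<integral>x. g l x \<partial>M) = 1"
  using Z_pos[of l] by (simp add: g_def Z_def)

lemma int_Vg: "0 \<le> l \<Longrightarrow> (\<integral>x. V x * g l x \<partial>M) = mm l"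
  by (simp add: g_def mm_def N_def)

lemma ln_g: "0 \<le> l \<Longrightarrow> ln (g l x) = - l * V x - ln (Z l)"
  using Z_pos[of l] by (simp add: g_def ln_div)

lemma integral_G: "0 \<le> l \<Longrightarrow> f \<in> borel_measurable M \<Longrightarrow> (\<integral>x. f x \<partial>G l) = (\<integral>x. g l x * f x \<partial>M)"
  unfolding G_def using g_pos[of l]
  by (subst integral_density) (auto intro: less_imp_le)

lemma G_sets: "sets (G l) = sets M" by (simp add: G_def)

lemma G_prob: "0 \<le> l \<Longrightarrow> prob_space (G l)"
proof (rule prob_spaceI)
  assume l: "0 \<le> l"
  have "emeasure (G l) (space (G l)) = (\<integral>\<^sup>+x. ennreal (g l x) \<partial>M)"
    unfolding G_def by (simp add: emeasure_density)
  also have "\<dots> = ennreal (\<integral>x. g l x \<partial>M)"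
    using g_pos[OF l] int_exp[OF l] Z_pos[OF l]
    by (intro nn_integral_eq_integral) (auto simp: g_def less_imp_le)
  finally show "emeasure (G l) (space (G l)) = 1" using int_g[OF l] by simp
qed

lemma G_borel_prob: "0 \<le> l \<Longrightarrow> borel_prob (G l)"
  unfolding borel_prob_def using G_prob G_sets sets_M by simp

lemma G_ac: "absolutely_continuous M (G l)"
  unfolding G_def by (rule absolutely_continuousI_density) measurable

lemma RN_G: "0 \<le> l \<Longrightarrow> AE x in M. enn2real (RN_deriv M (G l) x) = g l x"
proof -
  assume l: "0 \<le> l"
  have "AE x in M. ennreal (g l x) = RN_deriv M (G l) x"
    unfolding G_def by (rule RN_deriv_unique) auto
  thus ?thesis apply eventually_elim using g_pos[OF l] by (metis enn2real_ennreal less_imp_le)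
qed

lemma G0: "G 0 = M"
proof -
  have "Z 0 = 1" by (simp add: Z_def prob_space)
  hence "g 0 = (\<lambda>_. 1)" by (simp add: g_def fun_eq_iff)
  thus ?thesis by (simp add: G_def density_1)
qed

end

definition phi :: "real \<Rightarrow> real" where "phi t = t * ln t"

lemma phi_lower: "0 \<le> t \<Longrightarrow> -1 \<le> phi t"
  using tangent_ineq[of t 1] by (simp add: phi_def)

context gibbs begin

definition Tf :: "real \<Rightarrow> ('a \<Rightarrow> real) \<Rightarrow> 'a \<Rightarrow> real" where
  "Tf l f x = phi (g l x) + (1 + ln (g l x)) * (f x - g l x)"
definition hf :: "real \<Rightarrow> ('a \<Rightarrow> real) \<Rightarrow> 'a \<Rightarrow> real" where
  "hf l f x = phi (f x) - Tf l f x"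

lemma Vf_int: "integrable M f \<Longrightarrow> integrable M (\<lambda>x. V x * f x)"
proof (rule Bochner_Integration.integrable_bound[where f="\<lambda>x. r\<^sup>2 * f x"])
  assume "integrable M f" thus "integrable M (\<lambda>x. r\<^sup>2 * f x)" by simp
  thus "(\<lambda>x. V x * f x) \<in> borel_measurable M" using \<open>integrable M f\<close> by measurable
  show "AE x in M. norm (V x * f x) \<le> norm (r\<^sup>2 * f x)"
    using V_le V_nonneg by (auto simp: abs_mult intro!: mult_right_mono)
qed

lemma g_int: "0 \<le> l \<Longrightarrow> integrable M (g l)"
  using int_exp[of l] unfolding g_def[abs_def] by simp

lemma Vg_int: "0 \<le> l \<Longrightarrow> integrable M (\<lambda>x. V x * g l x)"
  by (rule Vf_int[OF g_int])

lemma Tf_alt: "0 \<le> l \<Longrightarrow> Tf l f x = - l * (V x * g l x) - ln (Z l) * g l x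
   + (1 - ln (Z l)) * (f x - g l x) - l * (V x * f x) + l * (V x * g l x)"
  unfolding Tf_def phi_def ln_g by (simp add: algebra_simps)

lemma Tf_int: assumes "0 \<le> l" "integrable M f" shows "integrable M (Tf l f)"
proof -
  have e: "Tf l f = (\<lambda>x. - l * (V x * g l x) - ln (Z l) * g l x
   + (1 - ln (Z l)) * (f x - g l x) - l * (V x * f x) + l * (V x * g l x))"
    using Tf_alt[OF assms(1)] by auto
  have i: "integrable M (g l)" "integrable M (\<lambda>x. V x * g l x)" "integrable M (\<lambda>x. V x * f x)"
    using g_int Vg_int Vf_int assms by auto
  have i2: "integrable M (\<lambda>x. f x - g l x)" using i assms by auto
  show ?thesis unfolding e
    using i i2 assms by (intro Bochner_Integration.integrable_add Bochner_Integration.integrable_diff Bochner_Integration.integrable_mult_right) auto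
qed

lemma Tf_integral: assumes l: "0 \<le> l" and f: "integrable M f" "(\<integral>x. f x \<partial>M) = 1"
  shows "(\<integral>x. Tf l f x \<partial>M) = (\<integral>x. phi (g l x) \<partial>M) + l * (mm l - (\<integral>x. V x * f x \<partial>M))"
proof -
  have i: "integrable M (g l)" "integrable M (\<lambda>x. V x * g l x)" "integrable M (\<lambda>x. V x * f x)"
    using g_int Vg_int Vf_int l f by auto
  have p: "phi (g l x) = - l * (V x * g l x) - ln (Z l) * g l x" for x
    unfolding phi_def ln_g[OF l] by (simp add: algebra_simps)
  have "(\<integral>x. Tf l f x \<partial>M) = - l * mm l - ln (Z l) * 1 + (1 - ln (Z l)) * (1 - 1) - l * (\<integral>x. V x * f x \<partial>M) + l * mm l"
    apply (subst Tf_alt[OF l])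
    using i f int_g[OF l] int_Vg[OF l] by simp
  moreover have "(\<integral>x. phi (g l x) \<partial>M) = - l * mm l - ln (Z l) * 1"
    unfolding p using i int_g[OF l] int_Vg[OF l] by simp
  ultimately show ?thesis by (simp add: algebra_simps)
qed

lemma hf_nonneg: "0 \<le> l \<Longrightarrow> 0 \<le> f x \<Longrightarrow> 0 \<le> hf l f x"
  unfolding hf_def Tf_def phi_def using tangent_ineq[of "f x" "g l x"] g_pos by simp

lemma hf_zero: "0 \<le> l \<Longrightarrow> 0 \<le> f x \<Longrightarrow> hf l f x = 0 \<Longrightarrow> f x = g l x"
  unfolding hf_def Tf_def phi_def using tangent_eq[of "f x" "g l x"] g_pos by simp

lemma hf_g: "hf l (g l) x = 0"
  unfolding hf_def Tf_def by simp

end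

lemma int_pos_fin:
  fixes f :: "'b \<Rightarrow> real"
  assumes "integrable M f" shows "(\<integral>\<^sup>+ x. ennreal (f x) \<partial>M) < \<infinity>"
proof -
  have "(\<integral>\<^sup>+ x. ennreal (f x) \<partial>M) \<le> (\<integral>\<^sup>+ x. ennreal (norm (f x)) \<partial>M)"
    by (intro nn_integral_mono ennreal_leI) auto
  moreover have "(\<integral>\<^sup>+ x. ennreal (norm (f x)) \<partial>M) < \<infinity>" using assms integrable_iff_bounded by blast
  ultimately show ?thesis by (rule le_less_trans)
qed

context gibbs begin

definition ENT :: "('a \<Rightarrow> real) \<Rightarrow> ereal" where
  "ENT f = enn2ereal (\<integral>\<^sup>+ x. ennreal (max 0 (phi (f x))) \<partial>M)
          - enn2ereal (\<integral>\<^sup>+ x. ennreal (max 0 (- phi (f x))) \<partial>M)"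

lemma rel_entropy_ENT: "absolutely_continuous M \<mu> \<Longrightarrow> rel_entropy M \<mu> = ENT (\<lambda>x. enn2real (RN_deriv M \<mu> x))"
  unfolding rel_entropy_def ENT_def Let_def phi_def by simp

lemma ENT_cong_AE: "AE x in M. f x = f' x \<Longrightarrow> ENT f = ENT f'"
proof -
  assume a: "AE x in M. f x = f' x"
  have "(\<integral>\<^sup>+ x. ennreal (max 0 (phi (f x))) \<partial>M) = (\<integral>\<^sup>+ x. ennreal (max 0 (phi (f' x))) \<partial>M)"
    using a by (intro nn_integral_cong_AE) auto
  moreover have "(\<integral>\<^sup>+ x. ennreal (max 0 (- phi (f x))) \<partial>M) = (\<integral>\<^sup>+ x. ennreal (max 0 (- phi (f' x))) \<partial>M)"
    using a by (intro nn_integral_cong_AE) auto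
  ultimately show ?thesis unfolding ENT_def by simp
qed

lemma ENT_decomp:
  assumes l: "0 \<le> l" and fm[measurable]: "f \<in> borel_measurable M" and f0: "\<And>x. 0 \<le> f x"
    and fi: "integrable M f"
  shows "ENT f = enn2ereal (\<integral>\<^sup>+ x. ennreal (hf l f x) \<partial>M) + ereal (\<integral>x. Tf l f x \<partial>M)"
proof -
  have Ti: "integrable M (Tf l f)" using Tf_int[OF l fi] .
  have Tm[measurable]: "Tf l f \<in> borel_measurable M" using Ti by auto
  have pm[measurable]: "(\<lambda>x. phi (f x)) \<in> borel_measurable M" unfolding phi_def by measurable
  have hm[measurable]: "hf l f \<in> borel_measurable M" unfolding hf_def[abs_def] by measurable
  define P where "P = (\<integral>\<^sup>+ x. ennreal (max 0 (phi (f x))) \<partial>M)"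
  define Q where "Q = (\<integral>\<^sup>+ x. ennreal (max 0 (- phi (f x))) \<partial>M)"
  define H where "H = (\<integral>\<^sup>+ x. ennreal (hf l f x) \<partial>M)"
  define Tp where "Tp = (\<integral>\<^sup>+ x. ennreal (Tf l f x) \<partial>M)"
  define Tn where "Tn = (\<integral>\<^sup>+ x. ennreal (- Tf l f x) \<partial>M)"
  have pw: "ennreal (max 0 (phi (f x))) + ennreal (- Tf l f x) =
      ennreal (hf l f x) + ennreal (Tf l f x) + ennreal (max 0 (- phi (f x)))" for x
  proof -
    have h0: "0 \<le> hf l f x" using hf_nonneg[OF l f0] .
    have e: "max 0 (phi (f x)) + max 0 (- Tf l f x) = hf l f x + max 0 (Tf l f x) + max 0 (- phi (f x))"
      unfolding hf_def by (simp add: max_def)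
    have "ennreal (max 0 (phi (f x))) + ennreal (- Tf l f x) = ennreal (max 0 (phi (f x))) + ennreal (max 0 (- Tf l f x))"
      by (simp add: ennreal_max_0)
    also have "\<dots> = ennreal (max 0 (phi (f x)) + max 0 (- Tf l f x))"
      by (simp add: ennreal_plus)
    also have "\<dots> = ennreal (hf l f x + max 0 (Tf l f x) + max 0 (- phi (f x)))" using e by simp
    also have "\<dots> = ennreal (hf l f x) + ennreal (max 0 (Tf l f x)) + ennreal (max 0 (- phi (f x)))"
      using h0 by (simp add: ennreal_plus)
    also have "\<dots> = ennreal (hf l f x) + ennreal (Tf l f x) + ennreal (max 0 (- phi (f x)))"
      by (simp add: ennreal_max_0)
    finally show ?thesis .
  qed
  have "P + Tn = (\<integral>\<^sup>+ x. ennreal (max 0 (phi (f x))) + ennreal (- Tf l f x) \<partial>M)"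
    unfolding P_def Tn_def by (rule nn_integral_add[symmetric]) auto
  also have "\<dots> = (\<integral>\<^sup>+ x. (ennreal (hf l f x) + ennreal (Tf l f x)) + ennreal (max 0 (- phi (f x))) \<partial>M)"
    by (rule nn_integral_cong) (rule pw)
  also have "\<dots> = (\<integral>\<^sup>+ x. (ennreal (hf l f x) + ennreal (Tf l f x)) \<partial>M) + Q"
    unfolding Q_def by (rule nn_integral_add) auto
  also have "(\<integral>\<^sup>+ x. (ennreal (hf l f x) + ennreal (Tf l f x)) \<partial>M) = H + Tp"
    unfolding H_def Tp_def by (rule nn_integral_add) auto
  finally have "P + Tn = H + Tp + Q" .
  moreover have "Q < \<infinity>"
  proof -
    have "Q \<le> (\<integral>\<^sup>+ x. 1 \<partial>M)" unfolding Q_def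
      using phi_lower[OF f0] by (intro nn_integral_mono) (auto simp: max_def)
    thus ?thesis using emeasure_space_1 by (simp add: space_M) (metis ennreal_one_less_top le_less_trans)
  qed
  moreover have "Tp < \<infinity>" "Tn < \<infinity>"
    unfolding Tp_def Tn_def using Ti int_pos_fin[of M "Tf l f"] int_pos_fin[of M "\<lambda>x. - Tf l f x"]
    by auto
  ultimately have "enn2ereal P - enn2ereal Q = enn2ereal H + (ereal (enn2real Tp) - ereal (enn2real Tn))"
    by (rule ereal_split_lemma)
  moreover have "(\<integral>x. Tf l f x \<partial>M) = enn2real Tp - enn2real Tn"
    unfolding Tp_def Tn_def using Ti by (rule real_lebesgue_integral_def)
  ultimately show ?thesis unfolding ENT_def P_def Q_def H_def by simp
qed

end

context gibbs begin

lemma G_entropy: assumes l: "0 \<le> l" shows "rel_entropy M (G l) = ereal (\<integral>x. phi (g l x) \<partial>M)"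
proof -
  have "rel_entropy M (G l) = ENT (g l)"
    using rel_entropy_ENT[OF G_ac] ENT_cong_AE[OF RN_G[OF l]] by simp
  also have "\<dots> = enn2ereal (\<integral>\<^sup>+ x. ennreal (hf l (g l) x) \<partial>M) + ereal (\<integral>x. Tf l (g l) x \<partial>M)"
    using g_pos[OF l] g_int[OF l] by (intro ENT_decomp[OF l]) (auto intro: less_imp_le)
  also have "\<dots> = ereal (\<integral>x. phi (g l x) \<partial>M)"
    by (simp add: hf_g Tf_def zero_ennreal.rep_eq)
  finally show ?thesis .
qed

lemma RN_facts:
  assumes bp: "borel_prob \<mu>" and ac: "absolutely_continuous M \<mu>"
  defines "f \<equiv> (\<lambda>x. enn2real (RN_deriv M \<mu> x))"
  shows "f \<in> borel_measurable M" "\<And>x. 0 \<le> f x" "integrable M f" "(\<integral>x. f x \<partial>M) = 1"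
    "(\<integral>x. V x * f x \<partial>M) = (\<integral>x. V x \<partial>\<mu>)"
    "\<mu> = density M (\<lambda>x. ennreal (f x))"
proof -
  have ps: "prob_space \<mu>" and sets: "sets \<mu> = sets M" using bp sets_M by (auto simp: borel_prob_def)
  have sf: "sigma_finite_measure \<mu>" using ps by (rule prob_space_imp_sigma_finite)
  show fm: "f \<in> borel_measurable M" unfolding f_def by measurable
  show "\<And>x. 0 \<le> f x" unfolding f_def by simp
  interpret P: prob_space \<mu> by (rule ps)
  have i1: "integrable \<mu> (\<lambda>_. 1::real)" by simp
  have "integrable M (\<lambda>x. enn2real (RN_deriv M \<mu> x) * 1)"
    by (subst RN_deriv_integrable[OF sf ac sets, symmetric]) (use i1 in auto)
  then show "integrable M f" by (simp add: f_def)
  have "(\<integral>x. 1 \<partial>\<mu>) = (\<integral>x. f x * 1 \<partial>M)"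
    unfolding f_def by (rule RN_deriv_integral[OF sf ac sets]) simp
  thus "(\<integral>x. f x \<partial>M) = 1" using P.prob_space by simp
  have "(\<integral>x. V x \<partial>\<mu>) = (\<integral>x. f x * V x \<partial>M)"
    unfolding f_def by (rule RN_deriv_integral[OF sf ac sets]) simp
  thus "(\<integral>x. V x * f x \<partial>M) = (\<integral>x. V x \<partial>\<mu>)" by (simp add: mult.commute)
  have "AE x in M. RN_deriv M \<mu> x \<noteq> \<infinity>" by (rule RN_deriv_finite[OF sf ac sets])
  hence "AE x in M. RN_deriv M \<mu> x = ennreal (f x)"
    unfolding f_def by eventually_elim (simp add: ennreal_enn2real_if top.not_eq_extremum)
  hence "density M (RN_deriv M \<mu>) = density M (\<lambda>x. ennreal (f x))"
    using fm by (intro density_cong) auto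
  thus "\<mu> = density M (\<lambda>x. ennreal (f x))" using density_RN_deriv[OF ac sets] by simp
qed

lemma gibbs_min:
  assumes l: "0 \<le> l" and le: "mm l \<le> \<sigma>\<^sup>2" and tight: "l = 0 \<or> mm l = \<sigma>\<^sup>2"
  shows "maxent_minimizer M A r \<sigma> (G l)" "\<And>m. maxent_minimizer M A r \<sigma> m \<Longrightarrow> m = G l"
proof -
  define E0 where "E0 = (\<integral>x. phi (g l x) \<partial>M)"
  have EG: "rel_entropy M (G l) = ereal E0" using G_entropy[OF l] E0_def by simp
  have featG: "maxent_feasible r A \<sigma> (G l)"
  proof -
    have "(\<integral>x. (trunc_dist r A x)\<^sup>2 \<partial>G l) = (\<integral>x. g l x * V x \<partial>M)"
      unfolding V_def[symmetric] by (rule integral_G[OF l]) simp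
    also have "\<dots> = mm l" using int_Vg[OF l] by (simp add: mult.commute)
    finally show ?thesis unfolding maxent_feasible_def using G_borel_prob[OF l] le by simp
  qed
  have key: "ereal E0 \<le> rel_entropy M \<mu> \<and> (rel_entropy M \<mu> \<le> ereal E0 \<longrightarrow> \<mu> = G l)"
    if fe: "maxent_feasible r A \<sigma> \<mu>" for \<mu>
  proof (cases "absolutely_continuous M \<mu>")
    case False
    thus ?thesis by (simp add: rel_entropy_def)
  next
    case ac: True
    have bp: "borel_prob \<mu>" using fe by (simp add: maxent_feasible_def)
    define f where "f = (\<lambda>x. enn2real (RN_deriv M \<mu> x))"
    note RF = RN_facts[OF bp ac, folded f_def]
    have f0: "\<And>x. 0 \<le> f x" by (simp add: f_def)
    have Vle: "(\<integral>x. V x * f x \<partial>M) \<le> \<sigma>\<^sup>2"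
      using fe RF(5) by (simp add: maxent_feasible_def V_def f_def)
    define H where "H = (\<integral>\<^sup>+ x. ennreal (hf l f x) \<partial>M)"
    have Ent: "rel_entropy M \<mu> = enn2ereal H + ereal (\<integral>x. Tf l f x \<partial>M)"
      using rel_entropy_ENT[OF ac] ENT_decomp[OF l RF(1) f0 RF(3)] by (simp add: f_def H_def)
    have TI: "(\<integral>x. Tf l f x \<partial>M) = E0 + l * (mm l - (\<integral>x. V x * f x \<partial>M))"
      using Tf_integral[OF l RF(3) RF(4)] E0_def by simp
    have nn: "0 \<le> l * (mm l - (\<integral>x. V x * f x \<partial>M))"
      using tight Vle l by auto
    hence TE: "E0 \<le> (\<integral>x. Tf l f x \<partial>M)" using TI by simp
    have H0: "0 \<le> enn2ereal H" by simp
    have part1: "ereal E0 \<le> rel_entropy M \<mu>"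
      unfolding Ent using TE H0
      by (metis add_mono ereal_less_eq(3) zero_ereal_def add.left_neutral)
    have part2: "\<mu> = G l" if le2: "rel_entropy M \<mu> \<le> ereal E0"
    proof -
      have "enn2ereal H + ereal (\<integral>x. Tf l f x \<partial>M) \<le> ereal (\<integral>x. Tf l f x \<partial>M)"
        using le2 TE Ent by (metis ereal_less_eq(3) order_trans)
      hence "enn2ereal H \<le> 0" 
        by (cases "enn2ereal H") auto
      hence "H = 0" using H0
        by (metis enn2ereal_inject order_antisym zero_ennreal.rep_eq)
      have hm: "(\<lambda>x. ennreal (hf l f x)) \<in> borel_measurable M"
        using RF(1) unfolding hf_def[abs_def] Tf_def[abs_def] phi_def by measurable
      have "AE x in M. ennreal (hf l f x) = 0"
        using \<open>H = 0\<close> nn_integral_0_iff_AE[OF hm] H_def by simp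
      hence "AE x in M. f x = g l x"
      proof eventually_elim
        fix x assume "ennreal (hf l f x) = 0"
        hence "hf l f x = 0" using hf_nonneg[OF l, of f x, OF f0] by (simp add: ennreal_eq_0_iff)
        thus "f x = g l x" using hf_zero[OF l, of f x] f0 by simp
      qed
      hence "density M (\<lambda>x. ennreal (f x)) = density M (\<lambda>x. ennreal (g l x))"
        using RF(1) by (intro density_cong) auto
      thus ?thesis using RF(6) G_def f_def by simp
    qed
    show ?thesis using part1 part2 by blast
  qed
  show "maxent_minimizer M A r \<sigma> (G l)"
    unfolding maxent_minimizer_def
  proof (intro conjI allI impI)
    show "maxent_feasible r A \<sigma> (G l)" by (rule featG)
    fix \<mu>' assume "maxent_feasible r A \<sigma> \<mu>'"
    from key[OF this] have "ereal E0 \<le> rel_entropy M \<mu>'" by blast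
    thus "rel_entropy M (G l) \<le> rel_entropy M \<mu>'" using EG by simp
  qed
  show "m = G l" if "maxent_minimizer M A r \<sigma> m" for m
  proof -
    have "maxent_feasible r A \<sigma> m" "rel_entropy M m \<le> rel_entropy M (G l)"
      using that featG by (auto simp: maxent_minimizer_def)
    thus ?thesis using key[of m] EG by auto
  qed
qed

end

lemma exp_lip: fixes a b v :: real assumes "0 \<le> a" "0 \<le> b" "0 \<le> v"
  shows "\<bar>exp (- a * v) - exp (- b * v)\<bar> \<le> v * \<bar>a - b\<bar>"
proof -
  have *: "exp (- a * v) - exp (- b * v) \<le> v * (b - a)" if "0 \<le> a" "a \<le> b" for a b :: real
  proof -
    have "exp (- a * v) - exp (- b * v) = exp (- a * v) * (1 - exp (- ((b - a) * v)))"
      by (simp add: algebra_simps exp_add[symmetric])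
    also have "\<dots> \<le> 1 * (1 - exp (- ((b - a) * v)))"
    proof (rule mult_right_mono)
      show "exp (- a * v) \<le> 1" using that assms by (simp add: mult_nonneg_nonneg)
      show "0 \<le> 1 - exp (- ((b - a) * v))" using that assms by (simp add: mult_nonneg_nonneg)
    qed
    also have "\<dots> \<le> (b - a) * v" using exp_ge_add_one_self[of "- ((b - a) * v)"] by simp
    finally show ?thesis by (simp add: mult.commute)
  qed
  have **: "0 \<le> exp (- a * v) - exp (- b * v)" if "0 \<le> a" "a \<le> b" for a b :: real
    using that assms by (simp add: mult_right_mono)
  show ?thesis
  proof (cases "a \<le> b")
    case True thus ?thesis using *[OF assms(1) True] **[OF assms(1) True] by (simp add: abs_if)
  next
    case False thus ?thesis using *[OF assms(2), of a] **[OF assms(2), of a] by (simp add: abs_if)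
  qed
qed

lemma lip_cont: fixes F :: "real \<Rightarrow> real"
  assumes "\<And>a b. a \<in> S \<Longrightarrow> b \<in> S \<Longrightarrow> \<bar>F a - F b\<bar> \<le> C * \<bar>a - b\<bar>" "0 \<le> C"
  shows "continuous_on S F"
proof (rule lipschitz_on_continuous_on)
  show "C-lipschitz_on S F"
    by (rule lipschitz_onI) (use assms in \<open>auto simp: dist_real_def\<close>)
qed

context gibbs begin

lemma integral_abs_diff_bound:
  fixes f h :: "'a \<Rightarrow> real"
  assumes "integrable M f" "integrable M h" "\<And>x. \<bar>f x - h x\<bar> \<le> K"
  shows "\<bar>(\<integral>x. f x \<partial>M) - (\<integral>x. h x \<partial>M)\<bar> \<le> K"
proof -
  have "\<bar>(\<integral>x. f x \<partial>M) - (\<integral>x. h x \<partial>M)\<bar> = \<bar>\<integral>x. f x - h x \<partial>M\<bar>"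
    using assms by simp
  also have "\<dots> \<le> (\<integral>x. \<bar>f x - h x\<bar> \<partial>M)" using integral_norm_bound[of M "\<lambda>x. f x - h x"] by simp
  also have "\<dots> \<le> (\<integral>x. K \<partial>M)"
    using assms by (intro integral_mono) auto
  also have "\<dots> = K" by (simp add: prob_space)
  finally show ?thesis .
qed

lemma Z_cont: "continuous_on {0..} Z"
proof (rule lip_cont[where C="r\<^sup>2"])
  fix a b :: real assume "a \<in> {0..}" "b \<in> {0..}"
  hence ab: "0 \<le> a" "0 \<le> b" by auto
  show "\<bar>Z a - Z b\<bar> \<le> r\<^sup>2 * \<bar>a - b\<bar>" unfolding Z_def
  proof (rule integral_abs_diff_bound[OF int_exp[OF ab(1)] int_exp[OF ab(2)]])
    fix x
    have "\<bar>exp (- a * V x) - exp (- b * V x)\<bar> \<le> V x * \<bar>a - b\<bar>" by (rule exp_lip[OF ab V_nonneg])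
    also have "\<dots> \<le> r\<^sup>2 * \<bar>a - b\<bar>" using V_le by (intro mult_right_mono) auto
    finally show "\<bar>exp (- a * V x) - exp (- b * V x)\<bar> \<le> r\<^sup>2 * \<bar>a - b\<bar>" .
  qed
qed simp

lemma N_cont: "continuous_on {0..} N"
proof (rule lip_cont[where C="r\<^sup>2 * r\<^sup>2"])
  fix a b :: real assume "a \<in> {0..}" "b \<in> {0..}"
  hence ab: "0 \<le> a" "0 \<le> b" by auto
  show "\<bar>N a - N b\<bar> \<le> r\<^sup>2 * r\<^sup>2 * \<bar>a - b\<bar>" unfolding N_def
  proof (rule integral_abs_diff_bound[OF int_Vexp[OF ab(1)] int_Vexp[OF ab(2)]])
    fix x
    have "\<bar>V x * exp (- a * V x) - V x * exp (- b * V x)\<bar> = V x * \<bar>exp (- a * V x) - exp (- b * V x)\<bar>"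
      using V_nonneg[of x] by (simp add: abs_mult right_diff_distrib[symmetric])
    also have "\<dots> \<le> V x * (V x * \<bar>a - b\<bar>)"
      by (intro mult_left_mono exp_lip[OF ab V_nonneg] V_nonneg)
    also have "\<dots> \<le> r\<^sup>2 * (r\<^sup>2 * \<bar>a - b\<bar>)"
      using V_le[of x] V_nonneg[of x] by (intro mult_mono) auto
    finally show "\<bar>V x * exp (- a * V x) - V x * exp (- b * V x)\<bar> \<le> r\<^sup>2 * r\<^sup>2 * \<bar>a - b\<bar>" by simp
  qed
qed simp

lemma mm_cont: "continuous_on {0..} mm"
  unfolding mm_def[abs_def]
proof (intro continuous_on_divide Z_cont N_cont ballI)
  fix x :: real assume "x \<in> {0..}" thus "Z x \<noteq> 0" using Z_pos[of x] by auto
qed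

lemma pos_measure: assumes c: "0 < c" shows "0 < measure M {x. V x < c}"
proof -
  have op: "open {x. V x < c}" using V_cont by (intro open_Collect_less) (auto intro: continuous_intros)
  obtain a where a: "a \<in> A" using A_ne by auto
  have aS: "a \<in> {x. V x < c}" using a V_zero_iff[of a] c by simp
  have "a \<in> Supp M" using a A_supp by auto
  hence "emeasure M {x. V x < c} \<noteq> 0" using op aS unfolding Supp_def by blast
  thus ?thesis using emeasure_eq_measure by (simp add: measure_nonneg zero_less_measure_iff)
qed

lemma Z_lower2: assumes l: "0 \<le> l" shows "measure M {x. V x < c} * exp (- l * c) \<le> Z l"
proof -
  let ?S = "{x. V x < c}"
  have "{x \<in> space M. V x < c} \<in> sets M" by measurable
  hence Sm: "?S \<in> sets M" by (simp add: space_M)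
  have "measure M ?S * exp (- l * c) = (\<integral>x. indicator ?S x * exp (- l * c) \<partial>M)"
    using Sm by simp
  also have "\<dots> \<le> Z l" unfolding Z_def
  proof (rule integral_mono)
    have "emeasure M ?S < \<infinity>" by (simp add: emeasure_eq_measure)
    thus "integrable M (\<lambda>x. indicator ?S x * exp (- l * c))" using Sm
      by (intro integrable_mult_left integrable_real_indicator)
    show "integrable M (\<lambda>x. exp (- l * V x))" by (rule int_exp[OF l])
    fix x show "indicator ?S x * exp (- l * c) \<le> exp (- l * V x)"
      using l by (auto simp: indicator_def intro: mult_left_mono)
  qed
  finally show ?thesis .
qed

lemma mm_bound: assumes c: "0 < c" and l: "0 \<le> l"
  shows "mm l \<le> c + r\<^sup>2 / measure M {x. V x < c / 2} * exp (- l * c / 2)"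
proof -
  define p where "p = measure M {x. V x < c / 2}"
  have p: "0 < p" using pos_measure[of "c/2"] c p_def by simp
  have Zp: "0 < Z l" using Z_pos[OF l] .
  have N_le: "N l \<le> c * Z l + r\<^sup>2 * exp (- l * c)"
  proof -
    have "N l \<le> (\<integral>x. c * exp (- l * V x) + r\<^sup>2 * exp (- l * c) \<partial>M)" unfolding N_def
    proof (rule integral_mono)
      show "integrable M (\<lambda>x. V x * exp (- l * V x))" by (rule int_Vexp[OF l])
      show "integrable M (\<lambda>x. c * exp (- l * V x) + r\<^sup>2 * exp (- l * c))"
        using int_exp[OF l] by simp
      fix x show "V x * exp (- l * V x) \<le> c * exp (- l * V x) + r\<^sup>2 * exp (- l * c)"
      proof (cases "V x \<le> c")
        case True
        hence "V x * exp (- l * V x) \<le> c * exp (- l * V x)" by (intro mult_right_mono) auto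
        thus ?thesis by (smt (verit) exp_gt_zero mult_pos_pos r_pos zero_less_power)
      next
        case False
        hence "exp (- l * V x) \<le> exp (- l * c)" using l by (auto intro: mult_left_mono)
        hence "V x * exp (- l * V x) \<le> r\<^sup>2 * exp (- l * c)"
          using V_le[of x] V_nonneg[of x] by (intro mult_mono) auto
        thus ?thesis using c by (smt (verit) exp_gt_zero mult_pos_pos)
      qed
    qed
    also have "\<dots> = c * Z l + r\<^sup>2 * exp (- l * c)"
      using int_exp[OF l] by (simp add: Z_def prob_space)
    finally show ?thesis .
  qed
  have Zl: "p * exp (- l * (c/2)) \<le> Z l" using Z_lower2[OF l, of "c/2"] p_def by simp
  have "mm l = N l / Z l" by (simp add: mm_def)
  also have "\<dots> \<le> (c * Z l + r\<^sup>2 * exp (- l * c)) / Z l" using N_le Zp by (simp add: divide_right_mono)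
  also have "\<dots> = c + r\<^sup>2 * exp (- l * c) / Z l" using Zp by (simp add: field_simps)
  also have "r\<^sup>2 * exp (- l * c) / Z l \<le> r\<^sup>2 * exp (- l * c) / (p * exp (- l * (c/2)))"
    using Zl p Zp by (intro divide_left_mono mult_pos_pos) auto
  also have "r\<^sup>2 * exp (- l * c) / (p * exp (- l * (c/2))) = r\<^sup>2 / p * exp (- l * c / 2)"
  proof -
    have "exp (- l * c) = exp (- l * (c/2)) * exp (- l * c / 2)" by (simp add: exp_add[symmetric])
    thus ?thesis using p by (simp add: field_simps)
  qed
  finally show ?thesis unfolding p_def by simp
qed

lemma mm_nonneg: "0 \<le> l \<Longrightarrow> 0 \<le> mm l"
  unfolding mm_def N_def using Z_pos[of l] V_nonneg by (auto intro!: divide_nonneg_pos integral_nonneg_AE)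

lemma mm_small: assumes e: "0 < e" shows "\<exists>L\<ge>0. \<forall>l\<ge>L. mm l < e"
proof -
  define c where "c = e / 3"
  define K where "K = r\<^sup>2 / measure M {x. V x < c / 2}"
  have c: "0 < c" using e c_def by simp
  have K: "0 < K" unfolding K_def using pos_measure[of "c/2"] c r_pos by simp
  define L where "L = max 0 (- 2 * ln (c / K) / c)"
  have "mm l < e" if l: "l \<ge> L" for l
  proof -
    have l0: "0 \<le> l" using l L_def by simp
    have "- 2 * ln (c / K) / c \<le> l" using l L_def by simp
    hence "- 2 * ln (c / K) \<le> l * c" using c by (simp add: field_simps)
    hence "- l * c / 2 \<le> ln (c / K)" by simp
    hence "exp (- l * c / 2) \<le> c / K" using c K by (metis exp_le_cancel_iff exp_ln divide_pos_pos)
    hence "K * exp (- l * c / 2) \<le> c" using K by (simp add: field_simps)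
    moreover have "mm l \<le> c + K * exp (- l * c / 2)" using mm_bound[OF c l0] K_def by simp
    ultimately show ?thesis using c_def e by linarith
  qed
  thus ?thesis by (intro exI[of _ L]) (auto simp: L_def)
qed

lemma mm_tendsto: "(mm \<longlongrightarrow> 0) at_top"
proof (rule tendstoI)
  fix e :: real assume "0 < e"
  then obtain L where L: "L \<ge> 0" "\<And>l. l \<ge> L \<Longrightarrow> mm l < e" using mm_small by blast
  show "eventually (\<lambda>l. dist (mm l) 0 < e) at_top"
    unfolding eventually_at_top_linorder using L mm_nonneg
    by (intro exI[of _ L]) (auto simp: dist_real_def)
qed

lemma exists_lambda: assumes s: "0 < \<sigma>"
  shows "\<exists>l\<ge>0. mm l \<le> \<sigma>\<^sup>2 \<and> (l = 0 \<or> mm l = \<sigma>\<^sup>2)"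
proof (cases "mm 0 \<le> \<sigma>\<^sup>2")
  case True thus ?thesis by auto
next
  case False
  obtain L where L: "L \<ge> 0" "\<And>l. l \<ge> L \<Longrightarrow> mm l < \<sigma>\<^sup>2" using mm_small[of "\<sigma>\<^sup>2"] s by auto
  have "continuous_on {0..L} mm" using mm_cont by (rule continuous_on_subset) auto
  then obtain l where "l \<ge> 0" "l \<le> L" "mm l = \<sigma>\<^sup>2"
    using IVT2'[of mm L "\<sigma>\<^sup>2" 0] L False by force
  thus ?thesis by auto
qed

lemma nondeg_pos: assumes nd: "\<not> (AE x in M. x \<in> A)" and l: "0 \<le> l" shows "0 < mm l"
proof -
  have "N l \<noteq> 0"
  proof
    assume "N l = 0"
    hence "AE x in M. V x * exp (- l * V x) = 0"
      unfolding N_def using int_Vexp[OF l] V_nonneg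
      by (subst integral_nonneg_eq_0_iff_AE[symmetric]) auto
    hence "AE x in M. x \<in> A" by eventually_elim (simp add: V_zero_iff)
    thus False using nd by simp
  qed
  moreover have "0 \<le> N l" unfolding N_def using V_nonneg by (auto intro!: integral_nonneg_AE)
  ultimately show ?thesis unfolding mm_def using Z_pos[OF l] by simp
qed

lemma deg_zero: assumes d: "AE x in M. x \<in> A" shows "mm 0 = 0"
proof -
  have "AE x in M. V x * exp (- 0 * V x) = 0" using d by eventually_elim (simp add: V_zero_iff)
  hence "N 0 = 0" unfolding N_def by (rule integral_eq_zero_AE)
  thus ?thesis by (simp add: mm_def)
qed

end

lemma exp_decay: fixes c K :: real assumes c: "0 < c"
  shows "((\<lambda>l. K * exp (- l * c)) \<longlongrightarrow> 0) at_top"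
proof -
  have "filterlim (\<lambda>l::real. c * l) at_top at_top"
    by (rule filterlim_tendsto_pos_mult_at_top[OF tendsto_const c filterlim_ident])
  hence "filterlim (\<lambda>l::real. l * c) at_top at_top" by (simp add: mult.commute)
  hence "filterlim (\<lambda>l::real. - (l * c)) at_bot at_top"
    by (rule filterlim_compose[OF filterlim_uminus_at_bot_at_top])
  hence "((\<lambda>l. exp (- (l * c))) \<longlongrightarrow> 0) at_top"
    by (rule filterlim_compose[OF exp_at_bot])
  hence "((\<lambda>l. K * exp (- (l * c))) \<longlongrightarrow> K * 0) at_top" by (intro tendsto_mult tendsto_const)
  thus ?thesis by simp
qed

lemma quot_bound:
  fixes a b Z1 Z2 B e :: real
  assumes "0 < Z1" "0 < Z2" "\<bar>a - b\<bar> \<le> B * e" "\<bar>Z1 - Z2\<bar> \<le> e" "\<bar>b\<bar> \<le> B * Z2" "0 \<le> B"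
  shows "\<bar>a / Z1 - b / Z2\<bar> \<le> 2 * B * e / Z1"
proof -
  have eq: "a / Z1 - b / Z2 = (a - b) / Z1 + b * (Z2 - Z1) / (Z1 * Z2)"
    using assms by (simp add: field_simps)
  have "\<bar>b * (Z2 - Z1)\<bar> \<le> B * Z2 * e"
    using assms by (simp add: abs_mult abs_minus_commute mult_mono)
  hence t2: "\<bar>b * (Z2 - Z1) / (Z1 * Z2)\<bar> \<le> B * e / Z1"
  proof -
    assume a3: "\<bar>b * (Z2 - Z1)\<bar> \<le> B * Z2 * e"
    have p: "0 < Z1 * Z2" using assms by simp
    have "\<bar>b * (Z2 - Z1) / (Z1 * Z2)\<bar> = \<bar>b * (Z2 - Z1)\<bar> / (Z1 * Z2)"
      using p by (simp only: abs_divide abs_of_pos)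
    also have "\<dots> \<le> B * Z2 * e / (Z1 * Z2)" using p a3 by (rule divide_right_mono[OF _ less_imp_le, rotated])
    also have "\<dots> = B * e / Z1" using assms by (simp add: field_simps)
    finally show ?thesis .
  qed
  have t1: "\<bar>(a - b) / Z1\<bar> \<le> B * e / Z1" using assms by (simp add: abs_divide divide_right_mono)
  have "\<bar>a / Z1 - b / Z2\<bar> \<le> \<bar>(a - b) / Z1\<bar> + \<bar>b * (Z2 - Z1) / (Z1 * Z2)\<bar>"
    unfolding eq by (rule abs_triangle_ineq)
  also have "\<dots> \<le> B * e / Z1 + B * e / Z1" using t1 t2 by simp
  also have "\<dots> = 2 * B * e / Z1" by simp
  finally show ?thesis .
qed

lemma compare:
  fixes f :: "'a::metric_space \<Rightarrow> real" and B :: real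
  assumes g1: "gibbs M r1 A" and g2: "gibbs M r2 A"
    and fc: "continuous_on UNIV f" and fB: "\<And>x. \<bar>f x\<bar> \<le> B"
  shows "((\<lambda>l. (\<integral>x. f x \<partial>gibbs.G M r1 A l) - (\<integral>x. f x \<partial>gibbs.G M r2 A l)) \<longlongrightarrow> 0) at_top"
proof -
  interpret g1: gibbs M r1 A by (rule g1)
  interpret g2: gibbs M r2 A by (rule g2)
  define \<rho> where "\<rho> = min r1 r2"
  have \<rho>: "0 < \<rho>" using g1.r_pos g2.r_pos \<rho>_def by simp
  define c where "c = \<rho>\<^sup>2"
  have c: "0 < c" using \<rho> c_def by simp
  define p where "p = measure M {x. g1.V x < c / 2}"
  have p: "0 < p" using g1.pos_measure[of "c/2"] c p_def by simp
  have B0: "0 \<le> B" using fB[of undefined] abs_ge_zero[of "f undefined"] by linarith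
  have fm: "f \<in> borel_measurable M" using g1.meas borel_measurable_continuous_onI[OF fc] by blast
  have wdiff: "\<bar>exp (- l * g1.V x) - exp (- l * g2.V x)\<bar> \<le> exp (- l * c)" if l: "0 \<le> l" for l x
  proof (cases "infdist x A < \<rho>")
    case True
    hence "g1.V x = g2.V x" unfolding g1.V_def g2.V_def g1.td_eq g2.td_eq using \<rho>_def by simp
    thus ?thesis by simp
  next
    case False
    hence "\<rho> \<le> trunc_dist r1 A x" "\<rho> \<le> trunc_dist r2 A x"
      unfolding g1.td_eq g2.td_eq using \<rho>_def by auto
    hence "c \<le> g1.V x" "c \<le> g2.V x" unfolding c_def g1.V_def g2.V_def using \<rho>
      by (auto intro: power_mono)
    hence "exp (- l * g1.V x) \<le> exp (- l * c)" "exp (- l * g2.V x) \<le> exp (- l * c)"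
      using l by (auto intro: mult_left_mono)
    thus ?thesis by (smt (verit) exp_gt_zero)
  qed
  have bound: "\<bar>(\<integral>x. f x \<partial>g1.G l) - (\<integral>x. f x \<partial>g2.G l)\<bar> \<le> 2 * B / p * exp (- l * (c / 2))"
    if l: "0 \<le> l" for l
  proof -
    define a where "a = (\<integral>x. exp (- l * g1.V x) * f x \<partial>M)"
    define b where "b = (\<integral>x. exp (- l * g2.V x) * f x \<partial>M)"
    have wfb: "\<bar>exp (- l * V x) * f x\<bar> \<le> B * exp (- l * V x)" for V x
      using fB[of x] by (simp add: abs_mult mult.commute mult_right_mono)
    have w1: "exp (- l * g1.V x) \<le> 1" "exp (- l * g2.V x) \<le> 1" for x
      using g1.exp_bounds[OF l] g2.exp_bounds[OF l] by auto
    have i1: "integrable M (\<lambda>x. exp (- l * g1.V x) * f x)"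
    proof (rule g1.bounded_integrable[where B=B])
      show "(\<lambda>x. exp (- l * g1.V x) * f x) \<in> borel_measurable M" using fm by measurable
      fix x show "\<bar>exp (- l * g1.V x) * f x\<bar> \<le> B" using wfb[of g1.V x] w1[of x] B0
        by (smt (verit) mult_left_le)
    qed
    have i2: "integrable M (\<lambda>x. exp (- l * g2.V x) * f x)"
    proof (rule g1.bounded_integrable[where B=B])
      show "(\<lambda>x. exp (- l * g2.V x) * f x) \<in> borel_measurable M" using fm by measurable
      fix x show "\<bar>exp (- l * g2.V x) * f x\<bar> \<le> B" using wfb[of g2.V x] w1[of x] B0
        by (smt (verit) mult_left_le)
    qed
    have Z1: "0 < g1.Z l" "0 < g2.Z l" using g1.Z_pos[OF l] g2.Z_pos[OF l] by auto
    have I1: "(\<integral>x. f x \<partial>g1.G l) = a / g1.Z l"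
      unfolding g1.integral_G[OF l fm] a_def g1.g_def by (simp add: mult.commute)
    have I2: "(\<integral>x. f x \<partial>g2.G l) = b / g2.Z l"
      using g2.integral_G[OF l] fm g2.meas unfolding b_def g2.g_def by (simp add: mult.commute)
    have ab: "\<bar>a - b\<bar> \<le> B * exp (- l * c)" unfolding a_def b_def
    proof (rule g1.integral_abs_diff_bound[OF i1 i2])
      fix x
      have "\<bar>exp (- l * g1.V x) * f x - exp (- l * g2.V x) * f x\<bar> = \<bar>exp (- l * g1.V x) - exp (- l * g2.V x)\<bar> * \<bar>f x\<bar>"
        by (simp add: abs_mult[symmetric] left_diff_distrib)
      also have "\<dots> \<le> exp (- l * c) * B" using wdiff[OF l, of x] fB[of x] by (intro mult_mono) auto
      finally show "\<bar>exp (- l * g1.V x) * f x - exp (- l * g2.V x) * f x\<bar> \<le> B * exp (- l * c)"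
        by (simp add: mult.commute)
    qed
    have ZZ: "\<bar>g1.Z l - g2.Z l\<bar> \<le> exp (- l * c)" unfolding g1.Z_def g2.Z_def
      by (rule g1.integral_abs_diff_bound[OF g1.int_exp[OF l] g2.int_exp[OF l] wdiff[OF l]])
    have bB: "\<bar>b\<bar> \<le> B * g2.Z l"
    proof -
      have "\<bar>b\<bar> \<le> (\<integral>x. \<bar>exp (- l * g2.V x) * f x\<bar> \<partial>M)"
        unfolding b_def using integral_norm_bound[of M "\<lambda>x. exp (- l * g2.V x) * f x"] by simp
      also have "\<dots> \<le> (\<integral>x. B * exp (- l * g2.V x) \<partial>M)"
        using i2 g2.int_exp[OF l] wfb by (intro integral_mono) auto
      also have "\<dots> = B * g2.Z l" by (simp add: g2.Z_def)
      finally show ?thesis .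
    qed
    have "\<bar>a / g1.Z l - b / g2.Z l\<bar> \<le> 2 * B * exp (- l * c) / g1.Z l"
      by (rule quot_bound[OF Z1 ab ZZ bB B0])
    also have "\<dots> \<le> 2 * B * exp (- l * c) / (p * exp (- l * (c/2)))"
      using g1.Z_lower2[OF l, of "c/2"] p B0 Z1 unfolding p_def[symmetric]
      by (intro divide_left_mono mult_pos_pos) auto
    also have "\<dots> = 2 * B / p * exp (- l * (c / 2))"
    proof -
      have "exp (- l * c) = exp (- l * (c/2)) * exp (- l * (c / 2))" by (simp add: exp_add[symmetric])
      thus ?thesis using p by (simp add: field_simps)
    qed
    finally show ?thesis using I1 I2 by simp
  qed
  show ?thesis
  proof (rule Lim_null_comparison)
    show "\<forall>\<^sub>F l in at_top. norm ((\<integral>x. f x \<partial>g1.G l) - (\<integral>x. f x \<partial>g2.G l)) \<le> 2 * B / p * exp (- l * (c / 2))"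
      using bound by (auto intro: eventually_at_top_linorderI[of 0])
    show "((\<lambda>l. 2 * B / p * exp (- l * (c / 2))) \<longlongrightarrow> 0) at_top"
      by (rule exp_decay) (use c in simp)
  qed
qed

context gibbs begin

lemma THE_G:
  assumes "0 \<le> l" "mm l \<le> \<sigma>\<^sup>2" "l = 0 \<or> mm l = \<sigma>\<^sup>2"
  shows "(THE m. maxent_minimizer M A r \<sigma> m) = G l"
  using gibbs_min[OF assms] by (rule the_equality)

lemma ex_unique: assumes "0 < \<sigma>" shows "\<exists>!m. maxent_minimizer M A r \<sigma> m"
proof -
  obtain l where "0 \<le> l" "mm l \<le> \<sigma>\<^sup>2" "l = 0 \<or> mm l = \<sigma>\<^sup>2" using exists_lambda[OF assms] by blast
  from gibbs_min[OF this] show ?thesis by blast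
qed

end

theorem proposition3p6:
  fixes \<nu> \<mu> :: "'a::metric_space measure" and A :: "'a set"
    and \<epsilon> R R' :: real
  assumes "\<epsilon> > 0" and "R > \<epsilon>" and "R' > \<epsilon>"
    and "standard_borel_space TYPE('a)"
    and "radon_prob \<nu>"
    and "closed A" and "A \<subseteq> Supp \<nu>"
    and "maxent_posterior \<nu> A R \<mu>"
  shows "maxent_posterior \<nu> A R' \<mu>"
proof -
  have bpM: "borel_prob \<nu>" using assms(5) by (simp add: radon_prob_def)
  hence psM: "prob_space \<nu>" and setsM: "sets \<nu> = sets (borel :: 'a measure)"
    by (auto simp: borel_prob_def)
  have H1: "\<And>\<sigma>. 0 < \<sigma> \<Longrightarrow> \<exists>!m. maxent_minimizer \<nu> A R \<sigma> m"
    and H2: "borel_prob \<mu>"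
    and H3: "weak_conv_filter (\<lambda>\<sigma>. THE m. maxent_minimizer \<nu> A R \<sigma> m) \<mu> (at_right 0)"
    using assms(8) by (auto simp: maxent_posterior_def)
  have R: "0 < R" "0 < R'" using assms(1-3) by auto
  have Ane: "A \<noteq> {}"
  proof
    assume A0: "A = {}"
    obtain m where "maxent_minimizer \<nu> A R (R/2) m" using H1[of "R/2"] R by auto
    hence bm: "borel_prob m" and le: "(\<integral>x. (trunc_dist R A x)\<^sup>2 \<partial>m) \<le> (R/2)\<^sup>2"
      by (auto simp: maxent_minimizer_def maxent_feasible_def)
    have "prob_space m" using bm by (simp add: borel_prob_def)
    hence "(\<integral>x. (trunc_dist R A x)\<^sup>2 \<partial>m) = R\<^sup>2"
      using A0 by (simp add: trunc_dist_def prob_space.prob_space)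
    thus False using le R by (simp add: power2_eq_square)
  qed
  have gR: "gibbs \<nu> R A"
    using psM setsM R Ane assms(6,7) by (intro gibbs.intro gibbs_axioms.intro) auto
  have gR': "gibbs \<nu> R' A"
    using psM setsM R Ane assms(6,7) by (intro gibbs.intro gibbs_axioms.intro) auto
  interpret gR: gibbs \<nu> R A by (rule gR)
  interpret gR': gibbs \<nu> R' A by (rule gR')
  have wc: "weak_conv_filter (\<lambda>\<sigma>. THE m. maxent_minimizer \<nu> A R' \<sigma> m) \<mu> (at_right 0)"
    unfolding weak_conv_filter_def
  proof (intro allI impI)
    fix f :: "'a \<Rightarrow> real" assume fcb: "continuous_on UNIV f \<and> bounded (range f)"
    obtain B where fB: "\<And>x. \<bar>f x\<bar> \<le> B" using fcb unfolding bounded_iff by auto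
    have fm: "f \<in> borel_measurable \<nu>" using gR.meas borel_measurable_continuous_onI fcb by blast
    define L where "L = (\<integral>x. f x \<partial>\<mu>)"
    have HF: "((\<lambda>\<sigma>. \<integral>x. f x \<partial>(THE m. maxent_minimizer \<nu> A R \<sigma> m)) \<longlongrightarrow> L) (at_right 0)"
      using H3 fcb unfolding weak_conv_filter_def L_def by blast
    have ev0: "eventually (\<lambda>\<sigma>::real. 0 < \<sigma>) (at_right 0)" by (rule eventually_at_right_less)
    have "((\<lambda>\<sigma>. \<integral>x. f x \<partial>(THE m. maxent_minimizer \<nu> A R' \<sigma> m)) \<longlongrightarrow> L) (at_right 0)"
    proof (cases "AE x in \<nu>. x \<in> A")
      case True
      have eqR: "(THE m. maxent_minimizer \<nu> A R \<sigma> m) = \<nu>" if "0 < \<sigma>" for \<sigma>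
        using gR.THE_G[of 0 \<sigma>] gR.deg_zero[OF True] gR.G0 by simp
      have eqR': "(THE m. maxent_minimizer \<nu> A R' \<sigma> m) = \<nu>" if "0 < \<sigma>" for \<sigma>
        using gR'.THE_G[of 0 \<sigma>] gR'.deg_zero[OF True] gR'.G0 by simp
      have "\<forall>\<^sub>F \<sigma> in at_right 0. (\<integral>x. f x \<partial>(THE m. maxent_minimizer \<nu> A R' \<sigma> m))
              = (\<integral>x. f x \<partial>(THE m. maxent_minimizer \<nu> A R \<sigma> m))"
        using ev0 by eventually_elim (simp add: eqR eqR')
      thus ?thesis using HF by (subst tendsto_cong) auto
    next
      case nd: False
      define s where "s l = sqrt (gR.mm l)" for l
      have s_lim: "filterlim s (at_right 0) at_top"
      proof (rule tendsto_imp_filterlim_at_right)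
        show "(s \<longlongrightarrow> 0) at_top" unfolding s_def[abs_def]
          using tendsto_real_sqrt[OF gR.mm_tendsto] by simp
        show "\<forall>\<^sub>F l in at_top. 0 < s l"
          using gR.nondeg_pos[OF nd] unfolding s_def by (auto intro: eventually_at_top_linorderI[of 0])
      qed
      have THE_s: "(THE m. maxent_minimizer \<nu> A R (s l) m) = gR.G l" if l: "0 \<le> l" for l
        using gR.THE_G[OF l, of "s l"] gR.mm_nonneg[OF l] unfolding s_def by simp
      have "((\<lambda>l. \<integral>x. f x \<partial>(THE m. maxent_minimizer \<nu> A R (s l) m)) \<longlongrightarrow> L) at_top"
        using filterlim_compose[OF HF s_lim] by (simp add: o_def)
      moreover have "\<forall>\<^sub>F l in at_top. (\<integral>x. f x \<partial>(THE m. maxent_minimizer \<nu> A R (s l) m)) = (\<integral>x. f x \<partial>gR.G l)"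
        using THE_s by (auto intro: eventually_at_top_linorderI[of 0])
      ultimately have lim1: "((\<lambda>l. \<integral>x. f x \<partial>gR.G l) \<longlongrightarrow> L) at_top"
        by (subst tendsto_cong[symmetric]) auto
      have lim2: "((\<lambda>l. (\<integral>x. f x \<partial>gR.G l) - (\<integral>x. f x \<partial>gR'.G l)) \<longlongrightarrow> 0) at_top"
        using compare[OF gR gR'] fcb fB by blast
      have lim3: "((\<lambda>l. \<integral>x. f x \<partial>gR'.G l) \<longlongrightarrow> L) at_top"
        using tendsto_diff[OF lim1 lim2] by simp
      define \<Lambda> where "\<Lambda> \<sigma> = (SOME l. 0 \<le> l \<and> gR'.mm l \<le> \<sigma>\<^sup>2 \<and> (l = 0 \<or> gR'.mm l = \<sigma>\<^sup>2))" for \<sigma>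
      have \<Lambda>p: "0 \<le> \<Lambda> \<sigma> \<and> gR'.mm (\<Lambda> \<sigma>) \<le> \<sigma>\<^sup>2 \<and> (\<Lambda> \<sigma> = 0 \<or> gR'.mm (\<Lambda> \<sigma>) = \<sigma>\<^sup>2)"
        if "0 < \<sigma>" for \<sigma>
        unfolding \<Lambda>_def using gR'.exists_lambda[OF that] by (rule someI_ex)
      have THE\<Lambda>: "(THE m. maxent_minimizer \<nu> A R' \<sigma> m) = gR'.G (\<Lambda> \<sigma>)" if "0 < \<sigma>" for \<sigma>
        using \<Lambda>p[OF that] gR'.THE_G by blast
      have \<Lambda>lim: "filterlim \<Lambda> at_top (at_right 0)"
        unfolding filterlim_at_top
      proof
        fix K :: real
        define K' where "K' = max K 0"
        have "continuous_on {0..K'} gR'.mm" using gR'.mm_cont by (rule continuous_on_subset) auto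
        then obtain x0 where x0: "x0 \<in> {0..K'}" "\<And>y. y \<in> {0..K'} \<Longrightarrow> gR'.mm x0 \<le> gR'.mm y"
          using continuous_attains_inf[of "{0..K'}" gR'.mm] K'_def by auto
        define c where "c = gR'.mm x0"
        have c: "0 < c" using gR'.nondeg_pos[OF nd] x0(1) c_def by auto
        have "\<forall>\<^sub>F \<sigma> in at_right 0. 0 < \<sigma> \<and> \<sigma> < sqrt c"
          unfolding eventually_at_right_field using c by (intro exI[of _ "sqrt c"]) auto
        thus "\<forall>\<^sub>F \<sigma> in at_right 0. K \<le> \<Lambda> \<sigma>"
        proof eventually_elim
          fix \<sigma> :: real assume s: "0 < \<sigma> \<and> \<sigma> < sqrt c"
          hence s2: "\<sigma>\<^sup>2 < c" using c by (metis abs_of_pos real_sqrt_abs real_sqrt_less_iff power2_eq_square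
              real_sqrt_mult_self)
          have "K' \<le> \<Lambda> \<sigma>"
          proof (rule ccontr)
            assume "\<not> K' \<le> \<Lambda> \<sigma>"
            hence "\<Lambda> \<sigma> \<in> {0..K'}" using \<Lambda>p[of \<sigma>] s by auto
            hence "c \<le> gR'.mm (\<Lambda> \<sigma>)" using x0 c_def by auto
            thus False using \<Lambda>p[of \<sigma>] s s2 by auto
          qed
          thus "K \<le> \<Lambda> \<sigma>" using K'_def by simp
        qed
      qed
      have "((\<lambda>\<sigma>. \<integral>x. f x \<partial>gR'.G (\<Lambda> \<sigma>)) \<longlongrightarrow> L) (at_right 0)"
        using filterlim_compose[OF lim3 \<Lambda>lim] by (simp add: o_def)
      moreover have "\<forall>\<^sub>F \<sigma> in at_right 0. (\<integral>x. f x \<partial>gR'.G (\<Lambda> \<sigma>)) = (\<integral>x. f x \<partial>(THE m. maxent_minimizer \<nu> A R' \<sigma> m))"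
        using ev0 by eventually_elim (simp add: THE\<Lambda>)
      ultimately show ?thesis by (subst tendsto_cong[symmetric]) auto
    qed
    thus "((\<lambda>\<sigma>. \<integral>x. f x \<partial>(THE m. maxent_minimizer \<nu> A R' \<sigma> m)) \<longlongrightarrow> (\<integral>x. f x \<partial>\<mu>)) (at_right 0)"
      by (simp add: L_def)
  qed
  show ?thesis unfolding maxent_posterior_def
    using gR'.ex_unique H2 wc by blast
qed

end
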